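(* Let $f$ be an orientation-preserving $C^1$ diffeomorphism of the circle $\mathrm{S}^1=\mathbb{R}/\mathbb{Z}$ with irrational rotation number $\rho$. Then there is a sequence $(h_n)$ of orientation-preserving $C^1$ circle diffeomorphisms such that $h_n f h_n^{-1}$ converges to the rotation $R_\rho: x\mapsto x+\rho$ in the $C^1$ topology. *)

theory Defs
  imports "HOL-Analysis.Analysis"
begin

text \<open>Orientation-preserving C^1 diffeomorphisms of the circle R/Z are represented by
their lifts F : R -> R: C^1 maps with everywhere positive derivative and F(x+1) = F(x)+1.
(Such F is an increasing C^1 bijection of R with C^1 inverse.)\<close>
definition circle_diffeo_lift :: "(real \<Rightarrow> real) \<Rightarrow> bool" where
  "circle_diffeo_lift F \<longleftrightarrow>
     (\<forall>x. F differentiable (at x)) \<and>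
     continuous_on UNIV (deriv F) \<and>
     (\<forall>x. deriv F x > 0) \<and>
     (\<forall>x. F (x + 1) = F x + 1)"

text \<open>Rotation number (of the lift; the rotation number of the circle map is its class mod 1).\<close>
definition rot_num :: "(real \<Rightarrow> real) \<Rightarrow> real" where
  "rot_num F = lim (\<lambda>n. ((F ^^ n) 0) / real n)"

end

theory Submission
  imports Defs
begin


lemma periodic_nat:
  fixes g :: "real \<Rightarrow> 'b::ab_group_add"
  assumes "\<And>x. g (x + 1) = g x"
  shows "g (x + real n) = g x"
proof (induction n)
  case (Suc n)
  have "g (x + real (Suc n)) = g ((x + real n) + 1)" by (simp add: algebra_simps)
  then show ?case using Suc assms by simp
qed simp

lemma periodic_int:
  fixes g :: "real \<Rightarrow> 'b::ab_group_add"
  assumes p: "\<And>x. g (x + 1) = g x"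
  shows "g (x + real_of_int m) = g x"
proof (cases "m \<ge> 0")
  case True
  then show ?thesis using periodic_nat[where g=g, OF p, of x "nat m"] by simp
next
  case False
  then have "g (x + real_of_int m + real (nat (-m))) = g (x + real_of_int m)"
    using periodic_nat[where g=g, OF p] by blast
  then show ?thesis using False by simp
qed

lemma periodic_frac:
  fixes g :: "real \<Rightarrow> 'b::ab_group_add"
  assumes p: "\<And>x. g (x + 1) = g x"
  shows "g x = g (frac x)"
  using periodic_int[where g=g, OF p, of "frac x" "\<lfloor>x\<rfloor>"] by (simp add: frac_def)

lemma periodic_bounded:
  fixes g :: "real \<Rightarrow> real"
  assumes p: "\<And>x. g (x + 1) = g x" and c: "continuous_on UNIV g"
  shows "\<exists>B. \<forall>x. \<bar>g x\<bar> \<le> B"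
proof -
  have "compact (g ` {0..1})"
    by (rule compact_continuous_image) (use c continuous_on_subset in auto)
  then obtain B where B: "\<forall>y\<in>g ` {0..1}. norm y \<le> B"
    using compact_imp_bounded bounded_iff by metis
  show ?thesis
  proof (intro exI allI)
    fix x :: real
    have "frac x \<in> {0..1}" using frac_lt_1[of x] by (auto simp: frac_ge_0 less_imp_le)
    then show "\<bar>g x\<bar> \<le> B" using B periodic_frac[where g=g, OF p, of x] by auto
  qed
qed

lemma periodic_unif:
  fixes g :: "real \<Rightarrow> real"
  assumes p: "\<And>x. g (x + 1) = g x" and c: "continuous_on UNIV g" and e: "e > 0"
  shows "\<exists>d>0. \<forall>x y. \<bar>x - y\<bar> \<le> d \<longrightarrow> \<bar>g x - g y\<bar> \<le> e"
proof -
  have "uniformly_continuous_on {-1..2} g"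
    by (rule compact_uniformly_continuous) (use c continuous_on_subset in auto)
  then obtain d where d: "d > 0" "\<And>x y. x \<in> {-1..2} \<Longrightarrow> y \<in> {-1..2} \<Longrightarrow> dist y x < d \<Longrightarrow> dist (g y) (g x) < e"
    unfolding uniformly_continuous_on_def using e by metis
  show ?thesis
  proof (intro exI[of _ "min (d/2) 1"] conjI allI impI)
    show "min (d/2) 1 > 0" using d by simp
    fix x y :: real assume xy: "\<bar>x - y\<bar> \<le> min (d/2) 1"
    define m where "m = \<lfloor>x\<rfloor>"
    have gx: "g x = g (x - m)" using periodic_int[where g=g, OF p, of "x - m" m] by simp
    have gy: "g y = g (y - m)" using periodic_int[where g=g, OF p, of "y - m" m] by simp
    have fl: "real_of_int m \<le> x" "x < real_of_int m + 1" unfolding m_def using floor_correct[of x] by auto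
    have "x - m \<in> {-1..2}" using fl by simp
    moreover have "y - m \<in> {-1..2}" using xy fl by (simp add: abs_le_iff)
    moreover have "dist (y - m) (x - m) < d" using xy d by (simp add: dist_real_def abs_minus_commute)
    ultimately have "dist (g (y - m)) (g (x - m)) < e" using d by blast
    then show "\<bar>g x - g y\<bar> \<le> e" using gx gy by (simp add: dist_real_def abs_minus_commute)
  qed
qed

lemma lift_nat:
  fixes G :: "real \<Rightarrow> real"
  assumes p: "\<And>x. G (x + 1) = G x + 1"
  shows "G (x + real n) = G x + real n"
proof (induction n)
  case (Suc n)
  have "G (x + real (Suc n)) = G ((x + real n) + 1)" by (simp add: algebra_simps)
  then show ?case using Suc p by simp
qed simp

lemma lift_int:
  fixes G :: "real \<Rightarrow> real"
  assumes p: "\<And>x. G (x + 1) = G x + 1"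
  shows "G (x + real_of_int m) = G x + real_of_int m"
proof (cases "m \<ge> 0")
  case True
  then show ?thesis using lift_nat[where G=G, OF p, of x "nat m"] by simp
next
  case False
  then have "G (x + real_of_int m + real (nat (-m))) = G (x + real_of_int m) + real (nat (-m))"
    using lift_nat[where G=G, OF p] by blast
  then show ?thesis using False by simp
qed

lemma lift_funpow:
  fixes G :: "real \<Rightarrow> real"
  assumes p: "\<And>x. G (x + 1) = G x + 1"
  shows "(G ^^ n) (x + 1) = (G ^^ n) x + 1"
  by (induction n arbitrary: x) (auto simp: p)

lemma mono_funpow_real:
  fixes G :: "real \<Rightarrow> real"
  assumes "mono G"
  shows "mono (G ^^ n)"
  using assms by (induction n) (auto simp: mono_def)

lemma lift_close:
  fixes G :: "real \<Rightarrow> real"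
  assumes p: "\<And>x. G (x + 1) = G x + 1" and m: "mono G"
  shows "\<bar>G y - G x\<bar> \<le> \<bar>y - x\<bar> + 1"
proof -
  have key: "\<bar>G y - G x\<bar> \<le> \<bar>y - x\<bar> + 1" if xy: "x \<le> y" for x y
  proof -
    define k where "k = \<lceil>y - x\<rceil>"
    have "y \<le> x + k" unfolding k_def by linarith
    then have "G y \<le> G (x + k)" using m by (simp add: mono_def)
    also have "\<dots> = G x + k" by (rule lift_int[where G=G, OF p])
    finally have 1: "G y \<le> G x + k" .
    have 2: "G x \<le> G y" using m xy by (simp add: mono_def)
    have "k \<le> y - x + 1" unfolding k_def by linarith
    then show ?thesis using 1 2 xy by linarith
  qed
  show ?thesis
    using key[of x y] key[of y x] by (cases "x \<le> y") (auto simp: abs_minus_commute)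
qed



definition bsum :: "(real \<Rightarrow> real) \<Rightarrow> (real \<Rightarrow> real) \<Rightarrow> nat \<Rightarrow> real \<Rightarrow> real" where
  "bsum G \<psi> k x = (\<Sum>j<k. \<psi> ((G ^^ j) x))"

lemma bsum_Suc: "bsum G \<psi> (Suc k) x = bsum G \<psi> k x + \<psi> ((G ^^ k) x)"
  by (simp add: bsum_def)

lemma continuous_funpow_real:
  fixes G :: "real \<Rightarrow> real"
  assumes "continuous_on UNIV G"
  shows "continuous_on UNIV (G ^^ n)"
proof (induction n)
  case 0 then show ?case by (simp add: continuous_on_id)
next
  case (Suc n)
  then show ?case using assms
    by (simp add: continuous_on_compose2[OF assms Suc])
qed

lemma core:
  fixes G \<psi> :: "real \<Rightarrow> real"
  assumes cont: "continuous_on UNIV G" and mono: "mono G"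
    and bnd: "\<forall>x. \<bar>\<psi> x\<bar> \<le> B"
    and dst: "\<forall>e>0. \<exists>d>0. \<forall>w y y'. \<bar>y - w\<bar> \<le> d \<longrightarrow> \<bar>y' - w\<bar> \<le> d \<longrightarrow> y \<le> y' \<longrightarrow>
                  G y' - G y \<le> exp (\<psi> w + e) * (y' - y)"
    and noper: "\<forall>k>0. \<forall>p::int. \<forall>y::real. (G ^^ k) y \<noteq> y + p"
    and c: "c > 0"
  shows "\<exists>N0. \<forall>N\<ge>N0. \<forall>x. - c * N \<le> bsum G \<psi> N x"
proof -
  obtain \<delta> where d0: "\<delta> > 0" and dd: "\<forall>w y y'. \<bar>y - w\<bar> \<le> \<delta> \<longrightarrow> \<bar>y' - w\<bar> \<le> \<delta> \<longrightarrow> y \<le> y' \<longrightarrow>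
                  G y' - G y \<le> exp (\<psi> w + c/4) * (y' - y)"
    using dst c by (metis zero_less_divide_iff zero_less_numeral)
  define r where "r = min \<delta> 1 / 2"
  have r0: "r > 0" and r\<delta>: "2 * r \<le> \<delta>" using d0 by (auto simp: r_def)
  define Dn :: real where "Dn = ln 4"
  have Dn0: "Dn > 0" by (simp add: Dn_def)
  have B0: "B \<ge> 0" using bnd by (metis abs_ge_zero order_trans)
  define M where "M = B + c/2"
  have M0: "M > 0" using B0 c by (simp add: M_def)
  define L :: nat where "L = nat \<lceil>2/r\<rceil> + 1"
  have L0: "L > 0" by (simp add: L_def)
  have Lr: "real L > 2 / r" unfolding L_def by linarith
  have Lr2: "1 / real L < r / 2"
  proof -
    have "2 < real L * r" using Lr r0 by (simp add: field_simps)
    then show ?thesis using L0 r0 by (simp add: field_simps)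
  qed
  define N0 :: nat where "N0 = nat \<lceil>2 * L * (Dn + M) / c\<rceil> + 1"
  show ?thesis
  proof (intro exI allI impI)
    fix N x assume NN0: "N \<ge> N0"
    show "- c * N \<le> bsum G \<psi> N x"
    proof (rule ccontr)
      assume neg: "\<not> - c * N \<le> bsum G \<psi> N x"
      define S where "S k = bsum G \<psi> k x" for k
      define w where "w k = (G ^^ k) x" for k
      define s where "s k = S k + c/2 * k" for k
      have s0: "s 0 = 0" by (simp add: s_def S_def bsum_def)
      have sstep: "s k \<le> s (Suc k) + B" for k
      proof -
        have "s (Suc k) = s k + \<psi> (w k) + c/2" by (simp add: s_def S_def bsum_Suc w_def algebra_simps)
        then show ?thesis using bnd[rule_format, of "w k"] c by (auto simp: abs_le_iff)
      qed
      define h where "h t = - real t * (Dn + M)" for t :: nat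
      have NL: "real N > 2 * L * (Dn + M) / c" using NN0 unfolding N0_def by linarith
      have sN: "s N < h L"
      proof -
        have "c * N > 2 * L * (Dn + M)" using NL c by (simp add: field_simps)
        then show ?thesis using neg by (simp add: s_def S_def h_def algebra_simps)
      qed
      have hmono: "t \<le> t' \<Longrightarrow> h t' \<le> h t" for t t'
        using Dn0 M0 by (simp add: h_def mult_right_mono)
      define A where "A t = {k. k \<le> N \<and> h t \<le> s k}" for t
      define K where "K t = Max (A t)" for t
      have h0: "h t \<le> 0" for t using Dn0 M0 by (simp add: h_def)
      have Afin: "finite (A t)" for t by (simp add: A_def)
      have A0: "0 \<in> A t" for t using h0 s0 by (simp add: A_def)
      have KA: "K t \<in> A t" for t unfolding K_def using Afin A0 Max_in by blast
      have Kmax: "j \<in> A t \<Longrightarrow> j \<le> K t" for j t unfolding K_def using Afin by simp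
      have KN: "K t < N" if "t \<le> L" for t
      proof -
        have "K t \<le> N" using KA by (simp add: A_def)
        moreover have "K t \<noteq> N"
        proof
          assume "K t = N"
          then have "h t \<le> s N" using KA[of t] by (simp add: A_def)
          then show False using sN hmono[OF that] by linarith
        qed
        ultimately show ?thesis by simp
      qed
      have Kafter: "s j < h t" if "t \<le> L" "K t < j" "j \<le> N" for j t
        using Kmax[of j t] that by (force simp: A_def)
      have Kup: "s (K t) < h t + M" if "t \<le> L" for t
      proof -
        have "s (Suc (K t)) < h t" using Kafter[OF that, of "Suc (K t)"] KN[OF that] by simp
        then show ?thesis using sstep[of "K t"] c by (simp add: M_def)
      qed
      have Klow: "h t \<le> s (K t)" for t using KA by (simp add: A_def)
      have Kord: "K t < K t' \<and> s (K t') \<le> s (K t) - Dn" if tt: "t < t'" "t' \<le> L" for t t'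
      proof -
        have "A t \<subseteq> A t'" using hmono[of t t'] tt by (auto simp: A_def)
        then have le: "K t \<le> K t'" using Kmax KA by blast
        have "h t' \<le> h t - (Dn + M)"
        proof -
          have "real t + 1 \<le> real t'" using tt by simp
          then have "(real t + 1) * (Dn + M) \<le> real t' * (Dn + M)"
            using Dn0 M0 by (intro mult_right_mono) auto
          then show ?thesis by (simp add: h_def algebra_simps)
        qed
        then have sl: "s (K t') \<le> s (K t) - Dn" using Kup[OF tt(2)] Klow[of t] by linarith
        then have "K t \<noteq> K t'" using Dn0 by auto
        then show ?thesis using le sl by simp
      qed
      define bin where "bin t = nat \<lfloor>real L * frac (w (K t))\<rfloor>" for t
      have binr: "bin ` {0..L} \<subseteq> {0..<L}"
      proof
        fix y assume "y \<in> bin ` {0..L}"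
        then obtain t where y: "y = bin t" by auto
        have "real L * frac (w (K t)) < real L" using frac_lt_1 L0 by simp
        then have "\<lfloor>real L * frac (w (K t))\<rfloor> < int L" by (simp add: floor_less_iff)
        moreover have "0 \<le> \<lfloor>real L * frac (w (K t))\<rfloor>" by (simp add: frac_ge_0)
        ultimately show "y \<in> {0..<L}" using y by (simp add: bin_def nat_less_iff)
      qed
      have "card (bin ` {0..L}) \<le> L" using card_mono[OF _ binr] by simp
      then have "\<not> inj_on bin {0..L}" by (intro pigeonhole) simp
      then obtain t1 t2 where t12: "t1 \<in> {0..L}" "t2 \<in> {0..L}" "t1 \<noteq> t2" "bin t1 = bin t2"
        unfolding inj_on_def by blast
      obtain ta tb where tab: "ta < tb" "tb \<le> L" "bin ta = bin tb"
      proof (cases "t1 < t2")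
        case True then show ?thesis using that t12 by auto
      next
        case False then show ?thesis using that[of t2 t1] t12 by auto
      qed
      define a where "a = w (K ta)"
      define b where "b = w (K tb)"
      have fracclose: "\<bar>frac b - frac a\<bar> < 1 / real L"
      proof -
        have fe: "\<lfloor>real L * frac a\<rfloor> = \<lfloor>real L * frac b\<rfloor>"
          using tab(3) unfolding bin_def a_def b_def
          by (metis eq_nat_nat_iff frac_ge_0 of_nat_0_le_iff zero_le_floor zero_le_mult_iff)
        have "\<bar>real L * frac b - real L * frac a\<bar> < 1"
          using fe floor_correct[of "real L * frac a"] floor_correct[of "real L * frac b"] by linarith
        then have "real L * \<bar>frac b - frac a\<bar> < 1" by (simp add: abs_mult right_diff_distrib[symmetric])
        then show ?thesis using L0 by (simp add: field_simps)
      qed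
      define p where "p = \<lfloor>b\<rfloor> - \<lfloor>a\<rfloor>"
      define e where "e = b - a - p"
      have eb: "\<bar>e\<bar> < r / 2"
        using fracclose Lr2 by (simp add: e_def p_def frac_def algebra_simps)
      define ka where "ka = K ta"
      define k where "k = K tb - ka"
      have ko: "K ta < K tb" and sdrop: "s (K tb) \<le> s (K ta) - Dn" using Kord[OF tab(1,2)] by auto
      have k0: "k > 0" using ko by (simp add: k_def ka_def)
      have kb: "ka + k = K tb" using ko by (simp add: k_def ka_def)
      have wshift: "(G ^^ i) a = w (ka + i)" for i
        by (simp add: a_def w_def ka_def funpow_add add.commute)
      have smax: "s (ka + i) \<le> s ka" if "i \<le> k" for i
      proof (cases "i = 0")
        case True then show ?thesis by simp
      next
        case False
        have "ka + i \<le> N" using that kb KN[OF tab(2)] by simp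
        then have "s (ka + i) < h ta" using Kafter[of ta "ka + i"] False tab by (simp add: ka_def)
        then show ?thesis using Klow[of ta] by (simp add: ka_def)
      qed
      have monoi: "mono (G ^^ i)" for i using mono_funpow_real[OF mono] .
      have claim: "i \<le> k \<longrightarrow> (G ^^ i) (a + r) - (G ^^ i) (a - r) \<le> 2 * r * exp (S (ka + i) - S ka + c/4 * i)" for i
      proof (induction i)
        case 0 then show ?case by simp
      next
        case (Suc i)
        show ?case
        proof
          assume ik: "Suc i \<le> k"
          define U where "U = (G ^^ i) (a - r)"
          define V where "V = (G ^^ i) (a + r)"
          define W where "W = w (ka + i)"
          have IH: "V - U \<le> 2 * r * exp (S (ka + i) - S ka + c/4 * i)"
            using Suc ik by (simp add: U_def V_def)
          have "S (ka + i) - S ka + c/4 * i \<le> s (ka + i) - s ka"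
            using c by (simp add: s_def algebra_simps)
          also have "\<dots> \<le> 0" using smax[of i] ik by simp
          finally have "exp (S (ka + i) - S ka + c/4 * i) \<le> 1" by simp
          then have wid: "V - U \<le> 2 * r" using IH r0
            by (metis mult.right_neutral mult_left_mono order_trans less_imp_le mult_pos_pos zero_less_numeral)
          have UW: "U \<le> W" "W \<le> V" using monoi[of i] r0 wshift[of i]
            unfolding U_def V_def W_def wshift[of i, symmetric]
            using monoD[OF monoi[of i], of "a - r" a] monoD[OF monoi[of i], of a "a + r"] r0 by simp_all
          have "G V - G U \<le> exp (\<psi> W + c/4) * (V - U)"
            using dd[rule_format, of U W V] UW wid r\<delta> by (simp add: abs_le_iff)
          also have "\<dots> \<le> exp (\<psi> W + c/4) * (2 * r * exp (S (ka + i) - S ka + c/4 * i))"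
            using IH by (simp add: mult_left_mono)
          also have "\<dots> = 2 * r * exp (S (ka + Suc i) - S ka + c/4 * Suc i)"
            by (simp add: S_def bsum_Suc W_def w_def exp_add[symmetric] algebra_simps)
          finally show "(G ^^ Suc i) (a + r) - (G ^^ Suc i) (a - r) \<le> 2 * r * exp (S (ka + Suc i) - S ka + c/4 * Suc i)"
            by (simp add: U_def V_def)
        qed
      qed
      define Ua where "Ua = (G ^^ k) (a - r)"
      define Va where "Va = (G ^^ k) (a + r)"
      have "S (ka + k) - S ka + c/4 * k \<le> s (ka + k) - s ka"
        using c by (simp add: s_def algebra_simps)
      also have "\<dots> \<le> - Dn" using sdrop kb by (simp add: ka_def)
      finally have "exp (S (ka + k) - S ka + c/4 * k) \<le> exp (- Dn)" by simp
      also have "exp (- Dn) = 1/4" by (simp add: Dn_def exp_minus)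
      finally have ex4: "exp (S (ka + k) - S ka + c/4 * k) \<le> 1/4" .
      have "Va - Ua \<le> 2 * r * exp (S (ka + k) - S ka + c/4 * k)"
        using claim[of k] unfolding Ua_def Va_def by simp
      also have "\<dots> \<le> 2 * r * (1/4)" using ex4 r0 by (intro mult_left_mono) auto
      finally have "Va - Ua \<le> 2 * r * (1/4)" .
      then have wk: "Va - Ua \<le> r / 2" by simp
      have bk: "(G ^^ k) a = b" using wshift[of k] kb by (simp add: b_def)
      have UbV: "Ua \<le> b" "b \<le> Va" using monoi[of k] r0 bk
        unfolding Ua_def Va_def bk[symmetric]
        using monoD[OF monoi[of k], of "a - r" a] monoD[OF monoi[of k], of a "a + r"] r0 by auto
      define g where "g y = (G ^^ k) y - y - p" for y
      have g1: "g (a - r) \<ge> 0" using UbV wk eb unfolding g_def Ua_def[symmetric] e_def abs_less_iff by linarith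
      have g2: "g (a + r) \<le> 0" using UbV wk eb unfolding g_def Va_def[symmetric] e_def abs_less_iff by linarith
      have gc: "continuous_on {a - r..a + r} g"
        unfolding g_def
        by (intro continuous_intros continuous_on_subset[OF continuous_funpow_real[OF cont]]) auto
      have ar: "a - r \<le> a + r" using r0 by simp
      obtain y where "g y = 0"
        using IVT2'[where f=g and a="a - r" and b="a + r" and y=0, OF g2 g1 ar gc] by blast
      then have "(G ^^ k) y = y + p" by (simp add: g_def)
      moreover have "\<forall>q::int. \<forall>z. (G ^^ k) z \<noteq> z + real_of_int q" using noper k0 by simp
      ultimately have "(G ^^ k) y \<noteq> (G ^^ k) y" by metis
      then show False by simp
    qed
  qed
qed



lemma tendsto_by_bound:
  fixes X :: "nat \<Rightarrow> real"
  assumes "\<And>m. m \<ge> 1 \<Longrightarrow> \<bar>X m - L\<bar> \<le> C / real m"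
  shows "X \<longlonglongrightarrow> L"
proof -
  have "(\<lambda>m. X m - L) \<longlonglongrightarrow> 0"
  proof (rule Lim_null_comparison)
    show "eventually (\<lambda>m. norm (X m - L) \<le> C / real m) sequentially"
      using assms by (auto simp: eventually_sequentially)
    show "(\<lambda>m. C / real m) \<longlonglongrightarrow> 0" by (rule lim_const_over_n)
  qed
  then show ?thesis by (simp add: LIM_zero_iff)
qed

locale cdl =
  fixes F :: "real \<Rightarrow> real"
  assumes cdl: "circle_diffeo_lift F"
begin

definition D where "D x = deriv F x"
definition \<phi> where "\<phi> x = ln (D x)"

lemma derF: "(F has_real_derivative D x) (at x)"
  using cdl unfolding circle_diffeo_lift_def D_def by (simp add: DERIV_deriv_iff_real_differentiable)

lemma Dpos: "D x > 0" using cdl unfolding circle_diffeo_lift_def D_def by simp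

lemma Dcont: "continuous_on UNIV D" using cdl unfolding circle_diffeo_lift_def D_def by simp

lemma Fper: "F (x + 1) = F x + 1" using cdl unfolding circle_diffeo_lift_def by simp

lemma Fcont: "continuous_on UNIV F"
  using derF by (meson DERIV_continuous continuous_at_imp_continuous_on)

lemma Fstrict: "x < y \<Longrightarrow> F x < F y"
  using DERIV_pos_imp_increasing[of x y F] derF Dpos by blast

lemma Fmono: "mono F" by (metis Fstrict monoI order_le_less)

lemma Finj: "inj F"
proof (rule injI)
  fix x y assume "F x = F y"
  then show "x = y" using Fstrict[of x y] Fstrict[of y x] by (cases x y rule: linorder_cases) auto
qed

lemma Dper: "D (x + 1) = D x"
proof -
  have "((\<lambda>y. F (y + 1)) has_real_derivative D (x + 1)) (at x)"
    using derF[of "x + 1"] DERIV_shift by blast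
  moreover have "((\<lambda>y. F (y + 1)) has_real_derivative D x) (at x)"
    using DERIV_add[OF derF[of x] DERIV_const[of 1 "at x"]] by (simp add: Fper)
  ultimately show ?thesis using DERIV_unique by blast
qed

lemma Dne0: "D x \<noteq> 0" using Dpos[of x] by simp

lemma \<phi>cont: "continuous_on UNIV \<phi>"
  unfolding \<phi>_def using Dcont by (intro continuous_intros) (auto simp: Dne0)

lemma \<phi>per: "\<phi> (x + 1) = \<phi> x" by (simp add: \<phi>_def Dper)

lemma D_exp: "D x = exp (\<phi> x)" using Dpos by (simp add: \<phi>_def)

definition B where "B = (SOME B. \<forall>x. \<bar>\<phi> x\<bar> \<le> B)"

lemma \<phi>bnd: "\<bar>\<phi> x\<bar> \<le> B"
  using someI_ex[OF periodic_bounded[of \<phi>, OF \<phi>per \<phi>cont]] unfolding B_def by blast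

lemma B0: "B \<ge> 0" using \<phi>bnd[of 0] by linarith

lemma Dlow: "D x \<ge> exp (- B)"
  using \<phi>bnd[of x] by (simp add: D_exp)

lemma Fsurj: "surj F"
proof -
  have "\<exists>x. F x = y" for y
  proof -
    define n where "n = \<lceil>\<bar>y - F 0\<bar>\<rceil>"
    have n1: "F (0 + real_of_int n) = F 0 + n" by (rule lift_int[where G=F, OF Fper])
    have n2: "F (0 + real_of_int (-n)) = F 0 - n" using lift_int[where G=F, OF Fper, of 0 "-n"] by simp
    have "F (- real_of_int n) \<le> y" "y \<le> F (real_of_int n)" "- real_of_int n \<le> real_of_int n"
      using n1 n2 unfolding n_def by (auto, linarith+)
    then show ?thesis using IVT'[of F "- real_of_int n" y "real_of_int n"] Fcont
      by (meson continuous_on_subset subset_UNIV)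
  qed
  then show ?thesis by (metis surjI)
qed

definition Fi where "Fi = inv F"

lemma F_Fi: "F (Fi y) = y" unfolding Fi_def using Fsurj by (simp add: surj_f_inv_f)
lemma Fi_F: "Fi (F x) = x" unfolding Fi_def using Finj by (simp add: inv_f_f)

lemma Fi_mono: "mono Fi"
proof (rule monoI)
  fix x y :: real assume "x \<le> y"
  then show "Fi x \<le> Fi y" using Fstrict[of "Fi y" "Fi x"] F_Fi by force
qed

lemma F_mvt: "x < x' \<Longrightarrow> \<exists>\<xi>. x < \<xi> \<and> \<xi> < x' \<and> F x' - F x = (x' - x) * D \<xi>"
  using MVT2[of x x' F D] derF by blast

lemma Fi_lip: "y \<le> y' \<Longrightarrow> Fi y' - Fi y \<le> exp B * (y' - y)"
proof -
  assume yy: "y \<le> y'"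
  show ?thesis
  proof (cases "Fi y < Fi y'")
    case True
    then obtain \<xi> where "y' - y = (Fi y' - Fi y) * D \<xi>" using F_mvt[OF True] F_Fi by metis
    moreover have "D \<xi> \<ge> exp (-B)" by (rule Dlow)
    ultimately have "y' - y \<ge> (Fi y' - Fi y) * exp (-B)" using True
      by (metis diff_gt_0_iff_gt less_imp_le mult_left_mono)
    then have "Fi y' - Fi y \<le> (y' - y) / exp (-B)" by (simp add: pos_le_divide_eq)
    then show ?thesis by (simp add: exp_minus mult.commute divide_inverse)
  next
    case False
    have "0 \<le> exp B * (y' - y)" using yy by simp
    then show ?thesis using False by linarith
  qed
qed

lemma Fi_cont: "continuous_on UNIV Fi"
proof -
  have "\<bar>Fi y' - Fi y\<bar> \<le> exp B * \<bar>y' - y\<bar>" for y y'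
  proof (cases "y \<le> y'")
    case True then show ?thesis using Fi_lip[OF True] monoD[OF Fi_mono True] by simp
  next
    case False then show ?thesis using Fi_lip[of y' y] monoD[OF Fi_mono, of y' y] by simp
  qed
  then have "lipschitz_on (exp B) UNIV Fi"
    by (intro lipschitz_onI) (auto simp: dist_real_def)
  then show ?thesis by (rule lipschitz_on_continuous_on)
qed

lemma dist_F: "\<forall>e>0. \<exists>d>0. \<forall>w y y'. \<bar>y - w\<bar> \<le> d \<longrightarrow> \<bar>y' - w\<bar> \<le> d \<longrightarrow> y \<le> y' \<longrightarrow>
                  F y' - F y \<le> exp (\<phi> w + e) * (y' - y)"
proof (intro allI impI)
  fix e :: real assume e: "e > 0"
  obtain d where d: "d > 0" "\<forall>x y. \<bar>x - y\<bar> \<le> d \<longrightarrow> \<bar>\<phi> x - \<phi> y\<bar> \<le> e"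
    using periodic_unif[of \<phi>, OF \<phi>per \<phi>cont e] by blast
  show "\<exists>d>0. \<forall>w y y'. \<bar>y - w\<bar> \<le> d \<longrightarrow> \<bar>y' - w\<bar> \<le> d \<longrightarrow> y \<le> y' \<longrightarrow>
                  F y' - F y \<le> exp (\<phi> w + e) * (y' - y)"
  proof (intro exI[of _ d] conjI allI impI)
    show "d > 0" using d by simp
    fix w y y' :: real assume h: "\<bar>y - w\<bar> \<le> d" "\<bar>y' - w\<bar> \<le> d" "y \<le> y'"
    show "F y' - F y \<le> exp (\<phi> w + e) * (y' - y)"
    proof (cases "y < y'")
      case True
      then obtain \<xi> where \<xi>: "y < \<xi>" "\<xi> < y'" "F y' - F y = (y' - y) * D \<xi>" using F_mvt by blast
      have "\<bar>\<xi> - w\<bar> \<le> d" using h \<xi> by (auto simp: abs_le_iff)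
      then have "\<phi> \<xi> \<le> \<phi> w + e" using d(2)[rule_format, of \<xi> w] by (simp add: abs_le_iff)
      then have "D \<xi> \<le> exp (\<phi> w + e)" by (simp add: D_exp)
      then show ?thesis using \<xi> True by (simp add: mult.commute mult_left_mono)
    next
      case False then show ?thesis using h by simp
    qed
  qed
qed

lemma dist_Fi: "\<forall>e>0. \<exists>d>0. \<forall>w y y'. \<bar>y - w\<bar> \<le> d \<longrightarrow> \<bar>y' - w\<bar> \<le> d \<longrightarrow> y \<le> y' \<longrightarrow>
                  Fi y' - Fi y \<le> exp ((\<lambda>z. - \<phi> (Fi z)) w + e) * (y' - y)"
proof (intro allI impI)
  fix e :: real assume e: "e > 0"
  obtain d0 where d0: "d0 > 0" "\<forall>x y. \<bar>x - y\<bar> \<le> d0 \<longrightarrow> \<bar>\<phi> x - \<phi> y\<bar> \<le> e"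
    using periodic_unif[of \<phi>, OF \<phi>per \<phi>cont e] by blast
  define d where "d = d0 / exp B"
  have dd: "exp B * d = d0" by (simp add: d_def)
  have lip: "\<bar>Fi a - Fi b\<bar> \<le> d0" if "\<bar>a - b\<bar> \<le> d" for a b
  proof (cases "b \<le> a")
    case True
    then have "Fi a - Fi b \<le> exp B * (a - b)" by (rule Fi_lip)
    also have "\<dots> \<le> exp B * d" using that True by (intro mult_left_mono) auto
    finally show ?thesis using monoD[OF Fi_mono True] dd by simp
  next
    case False
    then have "Fi b - Fi a \<le> exp B * (b - a)" by (intro Fi_lip) simp
    also have "\<dots> \<le> exp B * d" using that False by (intro mult_left_mono) auto
    finally show ?thesis using monoD[OF Fi_mono, of a b] False dd by simp
  qed
  show "\<exists>d>0. \<forall>w y y'. \<bar>y - w\<bar> \<le> d \<longrightarrow> \<bar>y' - w\<bar> \<le> d \<longrightarrow> y \<le> y' \<longrightarrow>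
                  Fi y' - Fi y \<le> exp ((\<lambda>z. - \<phi> (Fi z)) w + e) * (y' - y)"
  proof (intro exI[of _ d] conjI allI impI)
    show "d > 0" using d0 by (simp add: d_def)
    fix w y y' :: real assume h: "\<bar>y - w\<bar> \<le> d" "\<bar>y' - w\<bar> \<le> d" "y \<le> y'"
    show "Fi y' - Fi y \<le> exp ((\<lambda>z. - \<phi> (Fi z)) w + e) * (y' - y)"
    proof (cases "Fi y < Fi y'")
      case True
      then obtain \<xi> where \<xi>: "Fi y < \<xi>" "\<xi> < Fi y'" "y' - y = (Fi y' - Fi y) * D \<xi>"
        using F_mvt F_Fi by metis
      have "\<bar>Fi y - Fi w\<bar> \<le> d0" "\<bar>Fi y' - Fi w\<bar> \<le> d0" using lip h by auto
      then have "\<bar>\<xi> - Fi w\<bar> \<le> d0" using \<xi> by (auto simp: abs_le_iff)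
      then have "- \<phi> \<xi> \<le> - \<phi> (Fi w) + e" using d0(2)[rule_format, of \<xi> "Fi w"] by (simp add: abs_le_iff)
      moreover have "1 / D \<xi> = exp (- \<phi> \<xi>)" by (simp add: D_exp exp_minus divide_inverse)
      ultimately have inv: "1 / D \<xi> \<le> exp (- \<phi> (Fi w) + e)" by simp
      have "Fi y' - Fi y = (y' - y) * (1 / D \<xi>)" using \<xi> Dpos[of \<xi>] by (simp add: field_simps)
      also have "\<dots> \<le> (y' - y) * exp (- \<phi> (Fi w) + e)" using inv h by (intro mult_left_mono) auto
      finally show ?thesis by (simp add: mult.commute)
    next
      case False
      have "0 \<le> exp ((\<lambda>z. - \<phi> (Fi z)) w + e) * (y' - y)" using h by simp
      then show ?thesis using False by linarith
    qed
  qed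
qed

lemma F_Fi_pow: "(F ^^ k) ((Fi ^^ k) y) = y"
proof (induction k arbitrary: y)
  case (Suc k)
  have e1: "F ^^ Suc k = (F ^^ k) \<circ> F" by (rule funpow_Suc_right)
  have "(F ^^ Suc k) ((Fi ^^ Suc k) y) = (F ^^ k) (F (Fi ((Fi ^^ k) y)))"
    unfolding e1 by simp
  then show ?case using Suc F_Fi by simp
qed simp

lemma liftk: "(F ^^ k) (x + real_of_int p) = (F ^^ k) x + p"
  using lift_int[where G="F ^^ k", OF lift_funpow[where G=F, OF Fper]] by blast

lemma Fi_noper:
  assumes "\<forall>k>0. \<forall>p::int. \<forall>y::real. (F ^^ k) y \<noteq> y + p"
  shows "\<forall>k>0. \<forall>p::int. \<forall>y::real. (Fi ^^ k) y \<noteq> y + p"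
proof (intro allI impI notI)
  fix k :: nat and p :: int and y :: real
  assume k: "k > 0" and eq: "(Fi ^^ k) y = y + p"
  have "y = (F ^^ k) (y + p)" using F_Fi_pow[of k y] eq by simp
  also have "\<dots> = (F ^^ k) y + p" by (rule liftk)
  finally have "(F ^^ k) y = y + real_of_int (- p)" by simp
  then show False using assms k by blast
qed

lemma per_rot:
  assumes k: "k > 0" and eq: "(F ^^ k) y = y + real_of_int p"
  shows "rot_num F = real_of_int p / real k"
proof -
  have mult: "(F ^^ (q * k)) y = y + real q * p" for q
  proof (induction q)
    case (Suc q)
    have "(F ^^ (Suc q * k)) y = (F ^^ k) ((F ^^ (q * k)) y)" by (simp add: funpow_add)
    also have "\<dots> = (F ^^ k) (y + real_of_int (int q * p))" using Suc by simp
    also have "\<dots> = y + p + real_of_int (int q * p)" using liftk[of k y "int q * p"] eq by simp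
    finally show ?case by (simp add: algebra_simps)
  qed simp
  define C1 where "C1 = (\<Sum>r<k. \<bar>(F ^^ r) y - real r * p / k\<bar>)"
  have bnd: "\<bar>(F ^^ m) y - real m * p / k\<bar> \<le> C1" for m
  proof -
    define q r where "q = m div k" and "r = m mod k"
    have m: "m = r + q * k" by (simp add: q_def r_def)
    have rk: "r < k" using k by (simp add: r_def)
    have "(F ^^ m) y = (F ^^ r) ((F ^^ (q * k)) y)" by (simp add: m funpow_add)
    also have "\<dots> = (F ^^ r) y + real q * p" using mult liftk
      by (metis of_int_mult of_int_of_nat_eq)
    finally have "(F ^^ m) y - real m * p / k = (F ^^ r) y - real r * p / k"
      using k by (simp add: m field_simps)
    also have "\<bar>\<dots>\<bar> \<le> C1" unfolding C1_def
      by (rule member_le_sum[of r "{..<k}" "\<lambda>r. \<bar>(F ^^ r) y - real r * p / k\<bar>"]) (use rk in auto)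
    finally show ?thesis .
  qed
  have mono_k: "mono (F ^^ m)" for m using mono_funpow_real[OF Fmono] .
  have close: "\<bar>(F ^^ m) 0 - (F ^^ m) y\<bar> \<le> \<bar>y\<bar> + 1" for m
    using lift_close[where G="F ^^ m", OF lift_funpow[where G=F, OF Fper] mono_k, of 0 y] by simp
  have "(\<lambda>m. (F ^^ m) 0 / real m) \<longlonglongrightarrow> real_of_int p / real k"
  proof (rule tendsto_by_bound[where C="C1 + \<bar>y\<bar> + 1"])
    fix m :: nat assume m1: "m \<ge> 1"
    have "\<bar>(F ^^ m) 0 - real m * (p / k)\<bar> \<le> C1 + \<bar>y\<bar> + 1"
      using bnd[of m] close[of m] by (simp add: abs_le_iff)
    then have "\<bar>((F ^^ m) 0 - real m * (p / k)) / real m\<bar> \<le> (C1 + \<bar>y\<bar> + 1) / real m"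
      using m1 by (simp add: abs_div divide_right_mono)
    then show "\<bar>(F ^^ m) 0 / real m - real_of_int p / real k\<bar> \<le> (C1 + \<bar>y\<bar> + 1) / real m"
      using m1 by (simp add: diff_divide_distrib)
  qed
  then show ?thesis unfolding rot_num_def by (rule limI)
qed

lemma noper:
  assumes "rot_num F \<notin> \<rat>"
  shows "\<forall>k>0. \<forall>p::int. \<forall>y::real. (F ^^ k) y \<noteq> y + p"
proof (intro allI impI notI)
  fix k :: nat and p :: int and y :: real
  assume "k > 0" "(F ^^ k) y = y + p"
  then have "rot_num F = real_of_int p / real k" by (rule per_rot)
  then have "rot_num F \<in> \<rat>" by simp
  then show False using assms by simp
qed

end



context cdl begin

lemma Fi_pow_F: "m \<le> N \<Longrightarrow> (Fi ^^ m) ((F ^^ N) x) = (F ^^ (N - m)) x"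
proof (induction m)
  case (Suc m)
  then have "N - m = Suc (N - Suc m)" by simp
  then have "(Fi ^^ Suc m) ((F ^^ N) x) = Fi (F ((F ^^ (N - Suc m)) x))"
    using Suc by simp
  then show ?case by (simp add: Fi_F)
qed simp

lemma twosided:
  assumes irr: "rot_num F \<notin> \<rat>"
  shows "\<forall>c::real>0. \<exists>N0. \<forall>N\<ge>N0. \<forall>x. \<bar>bsum F \<phi> N x\<bar> \<le> c * N"
proof (intro allI impI)
  fix c :: real assume c: "c > 0"
  have np: "\<forall>k>0. \<forall>p::int. \<forall>y::real. (F ^^ k) y \<noteq> y + p" by (rule noper[OF irr])
  obtain N1 where N1: "\<forall>N\<ge>N1. \<forall>x. - c * N \<le> bsum F \<phi> N x"
    using core[of F \<phi> B c, OF Fcont Fmono _ dist_F np c] \<phi>bnd by blast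
  obtain N2 where N2: "\<forall>N\<ge>N2. \<forall>x. - c * N \<le> bsum Fi (\<lambda>z. - \<phi> (Fi z)) N x"
  proof -
    have "\<forall>x. \<bar>- \<phi> (Fi x)\<bar> \<le> B" using \<phi>bnd by simp
    then show ?thesis using core[of Fi "\<lambda>z. - \<phi> (Fi z)" B c, OF Fi_cont Fi_mono _ dist_Fi Fi_noper[OF np] c] that by blast
  qed
  show "\<exists>N0. \<forall>N\<ge>N0. \<forall>x. \<bar>bsum F \<phi> N x\<bar> \<le> c * N"
  proof (intro exI[of _ "max N1 N2"] allI impI)
    fix N :: nat and x :: real assume NN: "N \<ge> max N1 N2"
    have lo: "- c * N \<le> bsum F \<phi> N x" using N1 NN by simp
    have "- c * N \<le> bsum Fi (\<lambda>z. - \<phi> (Fi z)) N ((F ^^ N) x)" using N2 NN by simp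
    also have "bsum Fi (\<lambda>z. - \<phi> (Fi z)) N ((F ^^ N) x) = (\<Sum>j<N. - \<phi> ((F ^^ (N - Suc j)) x))"
      unfolding bsum_def
    proof (rule sum.cong)
      fix j assume "j \<in> {..<N}"
      then have "Fi ((Fi ^^ j) ((F ^^ N) x)) = (Fi ^^ Suc j) ((F ^^ N) x)" by simp
      also have "\<dots> = (F ^^ (N - Suc j)) x" using \<open>j \<in> {..<N}\<close> by (intro Fi_pow_F) simp
      finally show "- \<phi> (Fi ((Fi ^^ j) ((F ^^ N) x))) = - \<phi> ((F ^^ (N - Suc j)) x)" by simp
    qed simp
    also have "\<dots> = - (\<Sum>j<N. \<phi> ((F ^^ (N - Suc j)) x))" by (simp add: sum_negf)
    finally have hi0: "- c * N \<le> - (\<Sum>j<N. \<phi> ((F ^^ (N - Suc j)) x))" .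
    have "(\<Sum>j<N. \<phi> ((F ^^ (N - Suc j)) x)) = bsum F \<phi> N x"
      unfolding bsum_def by (rule sum.nat_diff_reindex)
    then have hi: "bsum F \<phi> N x \<le> c * N" using hi0 by simp
    show "\<bar>bsum F \<phi> N x\<bar> \<le> c * N" using lo hi by simp
  qed
qed

end



context cdl begin

lemma bsum_cont: "continuous_on UNIV (bsum F \<phi> i)"
proof -
  have "continuous_on UNIV (\<lambda>x. \<Sum>j<i. \<phi> ((F ^^ j) x))"
    by (intro continuous_on_sum continuous_on_compose2[OF \<phi>cont continuous_funpow_real[OF Fcont]]) auto
  then show ?thesis unfolding bsum_def[abs_def] .
qed

lemma bsum_per: "bsum F \<phi> i (x + 1) = bsum F \<phi> i x"
  by (simp add: bsum_def lift_funpow[where G=F, OF Fper] \<phi>per)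

lemma bsum_shift: "bsum F \<phi> i (F x) + \<phi> x = bsum F \<phi> (Suc i) x"
proof -
  have "bsum F \<phi> (Suc i) x = \<phi> x + (\<Sum>j<i. \<phi> ((F ^^ Suc j) x))"
    unfolding bsum_def by (subst sum.lessThan_Suc_shift) simp
  also have "(\<Sum>j<i. \<phi> ((F ^^ Suc j) x)) = bsum F \<phi> i (F x)"
    unfolding bsum_def by (simp add: funpow_Suc_right del: funpow.simps)
  finally show ?thesis by simp
qed

lemma construct:
  assumes N: "N > 0"
  shows "\<exists>H. circle_diffeo_lift H \<and>
    (\<forall>y. ((\<lambda>y. H (F (inv H y))) has_real_derivative exp (bsum F \<phi> N (inv H y) / N)) (at y))"
proof -
  define \<psi> where "\<psi> x = (\<Sum>i<N. bsum F \<phi> i x) / N" for x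
  have \<psi>cont: "continuous_on UNIV \<psi>"
    unfolding \<psi>_def[abs_def] using N by (intro continuous_intros continuous_on_sum bsum_cont) auto
  have \<psi>per: "\<psi> (x + 1) = \<psi> x" for x by (simp add: \<psi>_def bsum_per)
  have \<psi>key: "\<psi> (F x) + \<phi> x - \<psi> x = bsum F \<phi> N x / N" for x
  proof -
    have "\<psi> (F x) + \<phi> x - \<psi> x = (\<Sum>i<N. bsum F \<phi> i (F x) + \<phi> x - bsum F \<phi> i x) / N"
      using N by (simp add: \<psi>_def sum.distrib sum_subtractf field_simps)
    also have "(\<Sum>i<N. bsum F \<phi> i (F x) + \<phi> x - bsum F \<phi> i x) = (\<Sum>i<N. bsum F \<phi> (Suc i) x - bsum F \<phi> i x)"
      by (simp add: bsum_shift)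
    also have "\<dots> = bsum F \<phi> N x - bsum F \<phi> 0 x" by (rule sum_lessThan_telescope)
    finally show ?thesis by (simp add: bsum_def)
  qed
  define e where "e x = exp (\<psi> x)" for x
  have econt: "continuous_on UNIV e" unfolding e_def[abs_def] by (intro continuous_intros \<psi>cont)
  have epos: "e x > 0" for x by (simp add: e_def)
  have eper: "e (x + 1) = e x" for x by (simp add: e_def \<psi>per)
  obtain A where A: "\<And>x. (A has_vector_derivative e x) (at x)"
  proof -
    have ic: "isCont e x" for x using econt by (simp add: continuous_on_eq_continuous_at)
    have "\<exists>A. \<forall>x. - \<infinity> < ereal x \<longrightarrow> ereal x < \<infinity> \<longrightarrow> (A has_vector_derivative e x) (at x)"
      by (rule einterval_antiderivative) (auto intro: ic)
    then show ?thesis using that by auto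
  qed
  have dA: "(A has_real_derivative e x) (at x)" for x using A by (simp add: has_real_derivative_iff_has_vector_derivative)
  define C where "C = A 1 - A 0"
  have C0: "C > 0"
  proof -
    obtain z where "A 1 - A 0 = (1 - 0) * e z" using MVT2[of 0 1 A e] dA by auto
    then show ?thesis using epos[of z] by (simp add: C_def)
  qed
  have Aper: "A (x + 1) = A x + C" for x
  proof -
    have "\<forall>x. ((\<lambda>x. A (x + 1) - A x) has_real_derivative 0) (at x)"
    proof
      fix x
      have "((\<lambda>x. A (x + 1)) has_real_derivative e (x + 1)) (at x)"
        using dA[of "x + 1"] DERIV_shift by blast
      then have "((\<lambda>x. A (x + 1) - A x) has_real_derivative e (x + 1) - e x) (at x)"
        using dA[of x] by (intro DERIV_diff)
      then show "((\<lambda>x. A (x + 1) - A x) has_real_derivative 0) (at x)" by (simp add: eper)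
    qed
    then have "(\<lambda>x. A (x + 1) - A x) x = (\<lambda>x. A (x + 1) - A x) 0" by (rule DERIV_isconst_all)
    then show ?thesis by (simp add: C_def)
  qed
  define H where "H x = (A x - A 0) / C" for x
  have dH: "(H has_real_derivative e x / C) (at x)" for x
    unfolding H_def[abs_def] using dA[of x] C0 by (auto intro!: derivative_eq_intros)
  have derivH: "deriv H x = e x / C" for x using dH by (rule DERIV_imp_deriv)
  have Hper: "H (x + 1) = H x + 1" for x using C0 Aper[of x] by (simp add: H_def field_simps)
  have cH: "circle_diffeo_lift H"
    unfolding circle_diffeo_lift_def
  proof (intro conjI allI)
    show "H differentiable at x" for x using dH real_differentiable_def by blast
    show "continuous_on UNIV (deriv H)" unfolding derivH[abs_def] by (intro continuous_intros econt) (use C0 in auto)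
    show "deriv H x > 0" for x using epos C0 by (simp add: derivH)
    show "H (x + 1) = H x + 1" for x by (rule Hper)
  qed
  interpret Hc: cdl H by (rule cdl.intro[OF cH])
  have HD: "Hc.D x = e x / C" for x by (simp add: Hc.D_def derivH)
  have Hi_eq: "inv H = Hc.Fi" by (simp add: Hc.Fi_def)
  have dHi: "(Hc.Fi has_real_derivative inverse (e (Hc.Fi y) / C)) (at y)" for y
  proof (rule DERIV_inverse_function[where f=H and a="y - 1" and b="y + 1"])
    show "(H has_real_derivative e (Hc.Fi y) / C) (at (Hc.Fi y))" by (rule dH)
    show "e (Hc.Fi y) / C \<noteq> 0" using epos C0 by (metis divide_pos_pos less_irrefl)
    show "H (Hc.Fi z) = z" for z by (rule Hc.F_Fi)
    show "isCont Hc.Fi y" using Hc.Fi_cont by (simp add: continuous_on_eq_continuous_at)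
  qed auto
  show ?thesis
  proof (intro exI[of _ H] conjI allI cH)
    fix y
    define x where "x = Hc.Fi y"
    have "((\<lambda>y. H (F (Hc.Fi y))) has_real_derivative (e (F x) / C) * (D x * inverse (e x / C))) (at y)"
      unfolding x_def
      by (rule DERIV_chain'[OF DERIV_chain'[OF dHi derF] dH])
    also have "(e (F x) / C) * (D x * inverse (e x / C)) = exp (bsum F \<phi> N x / N)"
    proof -
      have "(e (F x) / C) * (D x * inverse (e x / C)) = exp (\<psi> (F x) + \<phi> x - \<psi> x)"
        using C0 by (simp add: e_def D_exp exp_add exp_diff field_simps)
      then show ?thesis by (simp add: \<psi>key)
    qed
    finally show "((\<lambda>y. H (F (inv H y))) has_real_derivative exp (bsum F \<phi> N (inv H y) / N)) (at y)"
      by (simp add: Hi_eq x_def)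
  qed
qed

end



context cdl begin

lemma conj_est:
  assumes cH: "circle_diffeo_lift H" and eta: "\<eta> \<ge> 0"
    and dG: "\<And>y. ((\<lambda>y. H (F (inv H y))) has_real_derivative g' y) (at y)"
    and g'b: "\<And>y. \<bar>g' y - 1\<bar> \<le> \<eta>"
  shows "(\<forall>y. \<bar>H (F (inv H y)) - y - H (F (inv H 0))\<bar> \<le> \<eta>) \<and>
         (\<exists>B'. \<forall>m\<ge>1. \<bar>(F ^^ m) 0 / real m - H (F (inv H 0))\<bar> \<le> \<eta> + B' / real m)"
proof -
  interpret Hc: cdl H by (rule cdl.intro[OF cH])
  define G where "G y = H (F (inv H y))" for y
  have Hi: "inv H = Hc.Fi" by (simp add: Hc.Fi_def)
  have Hiper: "Hc.Fi (y + 1) = Hc.Fi y + 1" for y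
  proof -
    have "H (Hc.Fi y + 1) = y + 1" using Hc.Fper Hc.F_Fi by simp
    then have "Hc.Fi (H (Hc.Fi y + 1)) = Hc.Fi (y + 1)" by simp
    then show ?thesis using Hc.Fi_F by simp
  qed
  have Gper: "G (y + 1) = G y + 1" for y by (simp add: G_def Hi Hiper Fper Hc.Fper)
  define Q where "Q y = G y - y" for y
  have Qper: "Q (y + 1) = Q y" for y by (simp add: Q_def Gper)
  have dQ: "(Q has_real_derivative g' y - 1) (at y)" for y
    unfolding Q_def[abs_def] using dG[of y] unfolding G_def[symmetric, abs_def]
    by (auto intro!: derivative_eq_intros)
  have part1: "\<bar>G y - y - G 0\<bar> \<le> \<eta>" for y
  proof -
    have "Q y = Q (frac y)" by (rule periodic_frac[where g=Q, OF Qper])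
    moreover have "\<bar>Q (frac y) - Q 0\<bar> \<le> \<eta>"
    proof (cases "frac y = 0")
      case True then show ?thesis using eta by (simp only: True diff_self abs_zero)
    next
      case False
      then have fp: "0 < frac y" using frac_ge_0[of y] by linarith
      obtain z where "Q (frac y) - Q 0 = (frac y - 0) * (g' z - 1)"
        using MVT2[of 0 "frac y" Q "\<lambda>y. g' y - 1"] dQ fp by blast
      then have "\<bar>Q (frac y) - Q 0\<bar> = frac y * \<bar>g' z - 1\<bar>" using fp by (simp add: abs_mult)
      also have "\<dots> \<le> 1 * \<eta>" using g'b[of z] frac_lt_1[of y] fp eta
        by (intro mult_mono) auto
      finally show ?thesis by simp
    qed
    ultimately show ?thesis by (simp add: Q_def)
  qed
  have Gpow: "(G ^^ m) y = H ((F ^^ m) (Hc.Fi y))" for m y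
  proof (induction m)
    case (Suc m)
    then show ?case by (simp add: G_def Hi Hc.Fi_F)
  qed (simp add: Hc.F_Fi)
  have Gpowb: "\<bar>(G ^^ m) y - y - real m * G 0\<bar> \<le> real m * \<eta>" for m y
  proof (induction m)
    case (Suc m)
    have "\<bar>G ((G ^^ m) y) - (G ^^ m) y - G 0\<bar> \<le> \<eta>" by (rule part1)
    then show ?case using Suc by (simp add: abs_le_iff algebra_simps) 
  qed simp
  obtain BH where BH: "\<forall>z. \<bar>H z - z\<bar> \<le> BH"
  proof -
    have "continuous_on UNIV (\<lambda>z. H z - z)" using Hc.Fcont by (intro continuous_intros)
    moreover have "(\<lambda>z. H z - z) (x + 1) = (\<lambda>z. H z - z) x" for x by (simp add: Hc.Fper)
    ultimately show ?thesis using periodic_bounded[of "\<lambda>z. H z - z"] that by blast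
  qed
  define a where "a = Hc.Fi 0"
  have mono_k: "mono (F ^^ m)" for m using mono_funpow_real[OF Fmono] .
  have close: "\<bar>(F ^^ m) a - (F ^^ m) 0\<bar> \<le> \<bar>a\<bar> + 1" for m
    using lift_close[where G="F ^^ m", OF lift_funpow[where G=F, OF Fper] mono_k, of a 0] by simp
  have part2: "\<forall>m\<ge>1. \<bar>(F ^^ m) 0 / real m - G 0\<bar> \<le> \<eta> + (BH + \<bar>a\<bar> + 1) / real m"
  proof (intro allI impI)
    fix m :: nat assume m1: "m \<ge> 1"
    have "\<bar>H ((F ^^ m) a) - real m * G 0\<bar> \<le> real m * \<eta>"
      using Gpowb[of m 0] Gpow[of m 0] by (simp add: a_def)
    then have "\<bar>(F ^^ m) 0 - real m * G 0\<bar> \<le> real m * \<eta> + (BH + \<bar>a\<bar> + 1)"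
      using BH[rule_format, of "(F ^^ m) a"] close[of m] by (simp add: abs_le_iff)
    then have "\<bar>(F ^^ m) 0 - real m * G 0\<bar> / real m \<le> (real m * \<eta> + (BH + \<bar>a\<bar> + 1)) / real m"
      using m1 by (intro divide_right_mono) auto
    moreover have "\<bar>(F ^^ m) 0 - real m * G 0\<bar> / real m = \<bar>(F ^^ m) 0 / real m - G 0\<bar>"
      using m1 by (simp add: field_simps abs_div[symmetric])
    moreover have "(real m * \<eta> + (BH + \<bar>a\<bar> + 1)) / real m = \<eta> + (BH + \<bar>a\<bar> + 1) / real m"
      using m1 by (simp add: field_simps)
    ultimately show "\<bar>(F ^^ m) 0 / real m - G 0\<bar> \<le> \<eta> + (BH + \<bar>a\<bar> + 1) / real m" by simp
  qed
  show ?thesis using part1 part2 unfolding G_def by blast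
qed

end



context cdl begin

definition good where
  "good N H \<longleftrightarrow> circle_diffeo_lift H \<and>
    (\<forall>y. ((\<lambda>y. H (F (inv H y))) has_real_derivative exp (bsum F \<phi> N (inv H y) / N)) (at y))"

definition Hs where "Hs n = (SOME H. good (Suc n) H)"

lemma Hs_good: "good (Suc n) (Hs n)"
proof -
  have "\<exists>H. good (Suc n) H" using construct[of "Suc n"] by (simp add: good_def)
  then show ?thesis unfolding Hs_def by (rule someI_ex)
qed

lemma exp_close: fixes t \<eta> :: real assumes "\<eta> > 0" "\<bar>t\<bar> \<le> ln (1 + \<eta>)" shows "\<bar>exp t - 1\<bar> \<le> \<eta>"
proof -
  have "t \<le> ln (1 + \<eta>)" using assms by (simp add: abs_le_iff)
  then have "exp t \<le> exp (ln (1 + \<eta>))" by (subst exp_le_cancel_iff)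
  then have up: "exp t \<le> 1 + \<eta>" using assms by simp
  have "- ln (1 + \<eta>) \<le> t" using assms by (simp add: abs_le_iff)
  then have "exp (- ln (1 + \<eta>)) \<le> exp t" by (subst exp_le_cancel_iff)
  then have "1 / (1 + \<eta>) \<le> exp t" using assms by (simp add: exp_minus divide_inverse)
  moreover have "1 - \<eta> \<le> 1 / (1 + \<eta>)"
  proof -
    have "(1 - \<eta>) * (1 + \<eta>) \<le> 1" by (simp add: algebra_simps)
    then show ?thesis using assms by (simp add: pos_le_divide_eq)
  qed
  ultimately show ?thesis using up by (simp add: abs_le_iff)
qed

lemma eventual:
  assumes irr: "rot_num F \<notin> \<rat>" and eta: "\<eta> > 0"
  shows "\<exists>N0. \<forall>n\<ge>N0. (\<forall>y. \<bar>deriv (\<lambda>y. Hs n (F (inv (Hs n) y))) y - 1\<bar> \<le> \<eta>) \<and>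
     (\<forall>y. \<bar>Hs n (F (inv (Hs n) y)) - y - Hs n (F (inv (Hs n) 0))\<bar> \<le> \<eta>) \<and>
     (\<exists>B'. \<forall>m\<ge>1. \<bar>(F ^^ m) 0 / real m - Hs n (F (inv (Hs n) 0))\<bar> \<le> \<eta> + B' / real m)"
proof -
  define c where "c = ln (1 + \<eta>)"
  have c0: "c > 0" using eta by (simp add: c_def)
  obtain N0 where N0: "\<forall>N\<ge>N0. \<forall>x. \<bar>bsum F \<phi> N x\<bar> \<le> c * N"
    using twosided[OF irr] c0 by blast
  show ?thesis
  proof (intro exI[of _ N0] allI impI)
    fix n assume n: "n \<ge> N0"
    define H where "H = Hs n"
    have gH: "good (Suc n) H" unfolding H_def by (rule Hs_good)
    define g' where "g' y = exp (bsum F \<phi> (Suc n) (inv H y) / Suc n)" for y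
    have dG: "((\<lambda>y. H (F (inv H y))) has_real_derivative g' y) (at y)" for y
      using gH unfolding good_def g'_def by blast
    have g'b: "\<bar>g' y - 1\<bar> \<le> \<eta>" for y
    proof -
      have "\<bar>bsum F \<phi> (Suc n) (inv H y)\<bar> \<le> c * Suc n" using N0 n le_SucI by blast
      then have "\<bar>bsum F \<phi> (Suc n) (inv H y) / Suc n\<bar> \<le> c"
        by (simp add: abs_div pos_divide_le_eq del: of_nat_Suc)
      then show ?thesis unfolding g'_def using exp_close[OF eta] by (simp add: c_def)
    qed
    have cH: "circle_diffeo_lift H" using gH by (simp add: good_def)
    show "(\<forall>y. \<bar>deriv (\<lambda>y. Hs n (F (inv (Hs n) y))) y - 1\<bar> \<le> \<eta>) \<and>
     (\<forall>y. \<bar>Hs n (F (inv (Hs n) y)) - y - Hs n (F (inv (Hs n) 0))\<bar> \<le> \<eta>) \<and>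
     (\<exists>B'. \<forall>m\<ge>1. \<bar>(F ^^ m) 0 / real m - Hs n (F (inv (Hs n) 0))\<bar> \<le> \<eta> + B' / real m)"
      using conj_est[OF cH less_imp_le[OF eta] dG g'b] g'b DERIV_imp_deriv[OF dG]
      unfolding H_def by simp
  qed
qed

end



context cdl begin

lemma rot_conv:
  assumes irr: "rot_num F \<notin> \<rat>"
  shows "(\<lambda>m. (F ^^ m) 0 / real m) \<longlonglongrightarrow> rot_num F"
proof -
  define X where "X m = (F ^^ m) 0 / real m" for m
  have "Cauchy X"
  proof (rule CauchyI)
    fix e :: real assume e: "e > 0"
    obtain N0 where N0: "\<forall>n\<ge>N0. (\<exists>B'. \<forall>m\<ge>1. \<bar>(F ^^ m) 0 / real m - Hs n (F (inv (Hs n) 0))\<bar> \<le> e/4 + B' / real m)"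
      using eventual[OF irr, of "e/4"] e by auto
    then obtain B' where B': "\<forall>m\<ge>1. \<bar>X m - Hs N0 (F (inv (Hs N0) 0))\<bar> \<le> e/4 + B' / real m"
      unfolding X_def by blast
    define g0 where "g0 = Hs N0 (F (inv (Hs N0) 0))"
    define M :: nat where "M = nat \<lceil>8 * \<bar>B'\<bar> / e\<rceil> + 1"
    have cl: "\<bar>X m - g0\<bar> < e/2" if m: "m \<ge> M" for m
    proof -
      have m1: "m \<ge> 1" using m by (simp add: M_def)
      have "real m > 8 * \<bar>B'\<bar> / e" using m unfolding M_def by linarith
      then have "8 * \<bar>B'\<bar> < e * real m" using e by (simp add: field_simps)
      then have "B' / real m < e / 4" using m1 by (simp add: field_simps abs_le_iff)
      moreover have "\<bar>X m - g0\<bar> \<le> e/4 + B' / real m" using B'[rule_format, OF m1] by (simp add: g0_def)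
      ultimately show ?thesis by linarith
    qed
    show "\<exists>M. \<forall>m\<ge>M. \<forall>n\<ge>M. norm (X m - X n) < e"
    proof (intro exI[of _ M] allI impI)
      fix m n assume "m \<ge> M" "n \<ge> M"
      then have "\<bar>X m - g0\<bar> < e/2" "\<bar>X n - g0\<bar> < e/2" using cl by auto
      then show "norm (X m - X n) < e" unfolding real_norm_def abs_less_iff by linarith
    qed
  qed
  then have "convergent X" by (simp add: Cauchy_convergent_iff)
  then have "X \<longlonglongrightarrow> lim X" by (simp add: convergent_LIMSEQ_iff)
  then show ?thesis by (simp add: X_def[abs_def] rot_num_def)
qed

lemma main_cdl:
  assumes irr: "rot_num F \<notin> \<rat>"
  shows "\<exists>H :: nat \<Rightarrow> real \<Rightarrow> real. (\<forall>n. circle_diffeo_lift (H n)) \<and>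
    (\<exists>k :: nat \<Rightarrow> int.
       uniform_limit UNIV (\<lambda>n x. H n (F (inv (H n) x)) - of_int (k n))
                          (\<lambda>x. x + rot_num F) sequentially \<and>
       uniform_limit UNIV (\<lambda>n x. deriv (\<lambda>y. H n (F (inv (H n) y))) x)
                          (\<lambda>x. 1) sequentially)"
proof (intro exI[of _ Hs] exI[of _ "\<lambda>n. 0"] conjI allI)
  fix n show "circle_diffeo_lift (Hs n)" using Hs_good[of n] by (simp add: good_def)
next
  have lim: "(\<lambda>m. (F ^^ m) 0 / real m) \<longlonglongrightarrow> rot_num F" by (rule rot_conv[OF irr])
  show "uniform_limit UNIV (\<lambda>n x. Hs n (F (inv (Hs n) x)) - of_int 0) (\<lambda>x. x + rot_num F) sequentially"
    unfolding uniform_limit_sequentially_iff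
  proof (intro allI impI)
    fix e :: real assume e: "e > 0"
    obtain N0 where N0: "\<forall>n\<ge>N0. (\<forall>y. \<bar>Hs n (F (inv (Hs n) y)) - y - Hs n (F (inv (Hs n) 0))\<bar> \<le> e/4) \<and>
        (\<exists>B'. \<forall>m\<ge>1. \<bar>(F ^^ m) 0 / real m - Hs n (F (inv (Hs n) 0))\<bar> \<le> e/4 + B' / real m)"
      using eventual[OF irr, of "e/4"] e by auto
    show "\<exists>N. \<forall>n\<ge>N. \<forall>x\<in>UNIV. dist (Hs n (F (inv (Hs n) x)) - of_int 0) (x + rot_num F) < e"
    proof (intro exI[of _ N0] allI impI ballI)
      fix n x assume n: "n \<ge> N0"
      define g0 where "g0 = Hs n (F (inv (Hs n) 0))"
      obtain B' where B': "\<forall>m\<ge>1. \<bar>(F ^^ m) 0 / real m - g0\<bar> \<le> e/4 + B' / real m"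
        using N0 n unfolding g0_def by blast
      have rc: "\<bar>rot_num F - g0\<bar> \<le> e/4"
      proof -
        have l1: "(\<lambda>m. \<bar>(F ^^ m) 0 / real m - g0\<bar>) \<longlonglongrightarrow> \<bar>rot_num F - g0\<bar>"
          by (intro tendsto_intros lim)
        have l2: "(\<lambda>m. e/4 + B' / real m) \<longlonglongrightarrow> e/4 + 0"
          by (intro tendsto_intros)
        show ?thesis using LIMSEQ_le[OF l1 l2] B' by auto
      qed
      have "\<bar>Hs n (F (inv (Hs n) x)) - x - g0\<bar> \<le> e/4" using N0 n unfolding g0_def by blast
      then have "\<bar>Hs n (F (inv (Hs n) x)) - (x + rot_num F)\<bar> \<le> e/2" using rc by (simp only: abs_le_iff) linarith
      then show "dist (Hs n (F (inv (Hs n) x)) - of_int 0) (x + rot_num F) < e"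
        using e by (simp add: dist_real_def)
    qed
  qed
next
  show "uniform_limit UNIV (\<lambda>n x. deriv (\<lambda>y. Hs n (F (inv (Hs n) y))) x) (\<lambda>x. 1) sequentially"
    unfolding uniform_limit_sequentially_iff
  proof (intro allI impI)
    fix e :: real assume e: "e > 0"
    obtain N0 where N0: "\<forall>n\<ge>N0. (\<forall>y. \<bar>deriv (\<lambda>y. Hs n (F (inv (Hs n) y))) y - 1\<bar> \<le> e/2)"
    proof -
      have "e/2 > 0" using e by simp
      from eventual[OF irr this] obtain N where "\<forall>n\<ge>N. (\<forall>y. \<bar>deriv (\<lambda>y. Hs n (F (inv (Hs n) y))) y - 1\<bar> \<le> e/2)"
        by blast
      then show ?thesis using that by blast
    qed
    show "\<exists>N. \<forall>n\<ge>N. \<forall>x\<in>UNIV. dist (deriv (\<lambda>y. Hs n (F (inv (Hs n) y))) x) 1 < e"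
    proof (intro exI[of _ N0] allI impI ballI)
      fix n x assume n: "n \<ge> N0"
      have "\<bar>deriv (\<lambda>y. Hs n (F (inv (Hs n) y))) x - 1\<bar> \<le> e/2" using N0 n by blast
      then show "dist (deriv (\<lambda>y. Hs n (F (inv (Hs n) y))) x) 1 < e"
        using e by (simp add: dist_real_def)
    qed
  qed
qed

end

theorem mainTheorem3:
  fixes F :: "real \<Rightarrow> real"
  assumes "circle_diffeo_lift F"
    and "rot_num F \<notin> \<rat>"
  shows "\<exists>H :: nat \<Rightarrow> real \<Rightarrow> real. (\<forall>n. circle_diffeo_lift (H n)) \<and>
    (\<exists>k :: nat \<Rightarrow> int.
       uniform_limit UNIV (\<lambda>n x. H n (F (inv (H n) x)) - of_int (k n))
                          (\<lambda>x. x + rot_num F) sequentially \<and>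
       uniform_limit UNIV (\<lambda>n x. deriv (\<lambda>y. H n (F (inv (H n) y))) x)
                          (\<lambda>x. 1) sequentially)"
proof -
  interpret cdl F by (rule cdl.intro[OF assms(1)])
  show ?thesis by (rule main_cdl[OF assms(2)])
qed


end
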